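(* Let $A,B$ be commuting nilpotent $n\times n$ matrices over $\mathbb{F}$ with $\mathrm{sh}(B)=\underline{\lambda}=(\lambda_1,\ldots,\lambda_t)$ and $\mathrm{sh}(A)=\underline{\mu}=(\mu_1,\ldots,\mu_s)$. If $s\ge n-\frac{\lambda_t}{2}$, then $\mu_1\le 2$.
   Context: $\mathbb{F}$ is an algebraically closed field of characteristic $0$. For a nilpotent matrix $A$, $\mathrm{sh}(A)$ is the partition (nonincreasing sequence of positive integers) of $n$ given by the sizes of the Jordan blocks of its Jordan canonical form; thus $\lambda_t$ is the smallest part of $\underline{\lambda}$ and $s$ is the number of Jordan blocks of $A$. *)

theory Defs
  imports "Jordan_Normal_Form.Jordan_Normal_Form_Uniqueness"
begin

definition nilpotent_mat :: "'a :: semiring_1 mat \<Rightarrow> bool" where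
  "nilpotent_mat A \<longleftrightarrow> (\<exists>k. A ^\<^sub>m k = 0\<^sub>m (dim_row A) (dim_col A))"

end

theory Submission
  imports Defs
begin


lemma kdim_le:
  fixes X :: "'a :: field mat"
  assumes X: "X \<in> carrier_mat n n"
  shows "kernel_dim X \<le> n"
proof -
  interpret K: kernel n n X by (unfold_locales, rule X)
  obtain b where fb: "finite b" and bb: "K.basis b" using kernel_basis_exists[OF X] by auto
  have bk: "b \<subseteq> mat_kernel X" using bb unfolding K.Ker.basis_def by auto
  hence bc: "b \<subseteq> carrier_vec n" using mat_kernel[OF X] by auto
  have li: "K.NC.lin_indpt b" using bb K.lindep_same[OF bk] unfolding K.Ker.basis_def by auto
  have "card b \<le> K.NC.dim" using K.NC.li_le_dim(2)[OF K.NC.fin_dim bc li] .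
  moreover have "K.dim = card b" using K.Ker.dim_basis[OF fb bb] .
  ultimately show ?thesis using K.NC.dim_is_n by simp
qed



lemma ker_eq:
  fixes X Y :: "'a :: field mat"
  assumes X: "X \<in> carrier_mat n n" and Y: "Y \<in> carrier_mat n n"
    and sub: "mat_kernel X \<subseteq> mat_kernel Y" and d: "kernel_dim Y \<le> kernel_dim X"
  shows "mat_kernel Y \<subseteq> mat_kernel X"
proof -
  interpret KX: kernel n n X by (unfold_locales, rule X)
  interpret KY: kernel n n Y by (unfold_locales, rule Y)
  obtain b where fb: "finite b" and bb: "KX.basis b" using kernel_basis_exists[OF X] by auto
  have bk: "b \<subseteq> mat_kernel X" using bb unfolding KX.Ker.basis_def by auto
  have li: "KX.NC.lin_indpt b" using bb KX.lindep_same[OF bk] unfolding KX.Ker.basis_def by auto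
  have dX: "KX.dim = card b" using KX.Ker.dim_basis[OF fb bb] .
  have bkY: "b \<subseteq> mat_kernel Y" using bk sub by auto
  have liY: "KY.lin_indpt b" using li KY.lindep_same[OF bkY] by auto
  obtain c where fc: "finite c" and cb: "KY.basis c" using kernel_basis_exists[OF Y] by auto
  have fdY: "KY.Ker.fin_dim" unfolding KY.Ker.fin_dim_def using fc cb unfolding KY.Ker.basis_def by auto
  have "KY.basis b"
    by (rule KY.Ker.dim_li_is_basis[OF fdY fb bkY liY], insert d dX, simp)
  hence "KY.span b = mat_kernel Y" unfolding KY.Ker.basis_def by auto
  moreover have "KY.span b = KX.span b" using KY.span_same[OF bkY] KX.span_same[OF bk] by simp
  moreover have "KX.span b = mat_kernel X" using bb unfolding KX.Ker.basis_def by auto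
  ultimately show ?thesis by simp
qed

lemma mat_kernel_zero: "mat_kernel (0\<^sub>m n n :: 'a :: field mat) = carrier_vec n"
  unfolding mat_kernel_def by auto

lemma kdim_full:
  fixes X :: "'a :: field mat"
  assumes X: "X \<in> carrier_mat n n" and d: "kernel_dim X \<ge> n"
  shows "mat_kernel X = carrier_vec n"
proof -
  have "mat_kernel (0\<^sub>m n n :: 'a mat) \<subseteq> mat_kernel X"
    by (rule ker_eq[OF X], insert kdim_le[of "0\<^sub>m n n :: 'a mat" n] d X, auto simp: mat_kernel_zero mat_kernel_def)
  thus ?thesis unfolding mat_kernel_zero using mat_kernel[OF X] by auto
qed

lemma full_kdim:
  fixes X :: "'a :: field mat"
  assumes X: "X \<in> carrier_mat n n" and k: "mat_kernel X = carrier_vec n"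
  shows "kernel_dim X = n"
proof -
  interpret K: kernel n n X by (unfold_locales, rule X)
  have "K.VK = K.NC.V" using k by (simp add: module_vec_def)
  hence "K.dim = K.NC.dim" by simp
  thus ?thesis using K.NC.dim_is_n by simp
qed



lemma pow_mat_add': assumes B: "(B :: 'a :: semiring_1 mat) \<in> carrier_mat n n"
  shows "B ^\<^sub>m (a + b) = B ^\<^sub>m a * B ^\<^sub>m b"
proof (induct b)
  case 0 then show ?case using B by simp
next
  case (Suc b)
  have "B ^\<^sub>m (a + Suc b) = (B ^\<^sub>m a * B ^\<^sub>m b) * B" using Suc by simp
  also have "\<dots> = B ^\<^sub>m a * (B ^\<^sub>m b * B)" using B by (simp add: assoc_mult_mat[of _ n n _ n _ n])
  finally show ?case by simp
qed

lemma pow_comm: assumes A: "(A :: 'a :: semiring_1 mat) \<in> carrier_mat n n" and B: "B \<in> carrier_mat n n"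
  and AB: "A * B = B * A"
  shows "A * B ^\<^sub>m k = B ^\<^sub>m k * A"
proof (induct k)
  case 0 then show ?case using A B by simp
next
  case (Suc k)
  have "A * B ^\<^sub>m Suc k = (A * B ^\<^sub>m k) * B" using A B by (simp add: assoc_mult_mat[of _ n n _ n _ n])
  also have "\<dots> = B ^\<^sub>m k * (A * B)" unfolding Suc using A B by (simp add: assoc_mult_mat[of _ n n _ n _ n])
  also have "\<dots> = B ^\<^sub>m Suc k * A" unfolding AB using A B by (simp add: assoc_mult_mat[of _ n n _ n _ n])
  finally show ?case .
qed

lemma pow_shift: assumes A: "(A :: 'a :: semiring_1 mat) \<in> carrier_mat n n" and B: "B \<in> carrier_mat n n"
  and AB: "A * B = B * A"
  shows "B ^\<^sub>m k * A * B = B ^\<^sub>m (Suc k) * A"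
proof -
  have "B ^\<^sub>m k * A * B = B ^\<^sub>m k * (A * B)" using A B by (simp add: assoc_mult_mat[of _ n n _ n _ n])
  also have "\<dots> = (B ^\<^sub>m k * B) * A" unfolding AB using A B by (simp add: assoc_mult_mat[of _ n n _ n _ n])
  finally show ?thesis by simp
qed

lemma stable:
  fixes A B :: "'a :: field mat"
  assumes A: "A \<in> carrier_mat n n" and B: "B \<in> carrier_mat n n"
  and AB: "A * B = B * A"
  and st: "mat_kernel (B ^\<^sub>m Suc j * A) \<subseteq> mat_kernel (B ^\<^sub>m j * A)"
  shows "mat_kernel (B ^\<^sub>m (j + i) * A) \<subseteq> mat_kernel (B ^\<^sub>m j * A)"
proof (induct i)
  case 0 then show ?case by simp
next
  case (Suc i)
  show ?case
  proof
    fix v assume v: "v \<in> mat_kernel (B ^\<^sub>m (j + Suc i) * A)"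
    have C: "\<And>k. B ^\<^sub>m k * A \<in> carrier_mat n n" using A B by auto
    from v have vc: "v \<in> carrier_vec n" and v0: "(B ^\<^sub>m (j + Suc i) * A) *\<^sub>v v = 0\<^sub>v n"
      using mat_kernelD[OF C v] mat_kernel[OF C] by auto
    have Bv: "B *\<^sub>v v \<in> carrier_vec n" using B vc by auto
    have "(B ^\<^sub>m (j + i) * A) *\<^sub>v (B *\<^sub>v v) = (B ^\<^sub>m (j + i) * A * B) *\<^sub>v v"
      using assoc_mult_mat_vec[OF C B vc] by simp
    also have "\<dots> = 0\<^sub>v n" unfolding pow_shift[OF A B AB] using v0 by simp
    finally have "B *\<^sub>v v \<in> mat_kernel (B ^\<^sub>m (j + i) * A)" using mat_kernelI[OF C Bv] by auto
    with Suc have "B *\<^sub>v v \<in> mat_kernel (B ^\<^sub>m j * A)" by auto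
    hence "(B ^\<^sub>m j * A) *\<^sub>v (B *\<^sub>v v) = 0\<^sub>v n" using mat_kernelD[OF C] by auto
    moreover have "(B ^\<^sub>m j * A * B) *\<^sub>v v = (B ^\<^sub>m j * A) *\<^sub>v (B *\<^sub>v v)"
      using assoc_mult_mat_vec[OF C B vc] .
    ultimately have "(B ^\<^sub>m j * A * B) *\<^sub>v v = 0\<^sub>v n" by simp
    hence "(B ^\<^sub>m Suc j * A) *\<^sub>v v = 0\<^sub>v n" unfolding pow_shift[OF A B AB] .
    hence "v \<in> mat_kernel (B ^\<^sub>m Suc j * A)" by (rule mat_kernelI[OF C vc])
    thus "v \<in> mat_kernel (B ^\<^sub>m j * A)" using st by auto
  qed
qed

lemma D1_dims:
  fixes A B :: "'a :: field mat"
  assumes A: "A \<in> carrier_mat n n" and B: "B \<in> carrier_mat n n"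
  and AB: "A * B = B * A" and nil: "B ^\<^sub>m N = 0\<^sub>m n n"
  shows "kernel_dim (B ^\<^sub>m j * A) \<ge> min n (kernel_dim A + j)"
proof (induct j)
  case 0 then show ?case using A B by simp
next
  case (Suc j)
  have C: "\<And>k. B ^\<^sub>m k * A \<in> carrier_mat n n" using A B by auto
  have sub: "mat_kernel (B ^\<^sub>m j * A) \<subseteq> mat_kernel (B ^\<^sub>m Suc j * A)"
  proof
    fix v assume v: "v \<in> mat_kernel (B ^\<^sub>m j * A)"
    from v have vc: "v \<in> carrier_vec n" and v0: "(B ^\<^sub>m j * A) *\<^sub>v v = 0\<^sub>v n"
      using mat_kernelD[OF C v] mat_kernel[OF C] by auto
    have "B ^\<^sub>m Suc j = B * B ^\<^sub>m j" using pow_comm[OF B B refl, of j] by simp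
    hence "B ^\<^sub>m Suc j * A = B * (B ^\<^sub>m j * A)" using A B
      by (simp add: assoc_mult_mat[of B n n "B ^\<^sub>m j" n A n])
    hence "(B ^\<^sub>m Suc j * A) *\<^sub>v v = (B * (B ^\<^sub>m j * A)) *\<^sub>v v" by simp
    also have "\<dots> = B *\<^sub>v ((B ^\<^sub>m j * A) *\<^sub>v v)" using assoc_mult_mat_vec[OF B C vc] .
    also have "\<dots> = 0\<^sub>v n" using v0 B by auto
    finally show "v \<in> mat_kernel (B ^\<^sub>m Suc j * A)" by (rule mat_kernelI[OF C vc])
  qed
  show ?case
  proof (cases "kernel_dim (B ^\<^sub>m j * A) \<ge> n")
    case True
    hence "mat_kernel (B ^\<^sub>m j * A) = carrier_vec n" using kdim_full[OF C] by auto
    moreover have "mat_kernel (B ^\<^sub>m Suc j * A) \<subseteq> carrier_vec n"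
      using mat_kernel[OF C[of "Suc j"]] by blast
    ultimately have "mat_kernel (B ^\<^sub>m Suc j * A) = carrier_vec n" using sub by blast
    hence "kernel_dim (B ^\<^sub>m Suc j * A) = n" by (rule full_kdim[OF C])
    thus ?thesis by simp
  next
    case False
    have "kernel_dim (B ^\<^sub>m Suc j * A) > kernel_dim (B ^\<^sub>m j * A)"
    proof (rule ccontr)
      assume "\<not> ?thesis"
      hence "mat_kernel (B ^\<^sub>m Suc j * A) \<subseteq> mat_kernel (B ^\<^sub>m j * A)"
        using ker_eq[OF C C sub] by auto
      from stable[OF A B AB this, of N]
      have s: "mat_kernel (B ^\<^sub>m (j + N) * A) \<subseteq> mat_kernel (B ^\<^sub>m j * A)" .
      have "B ^\<^sub>m (j + N) * A = 0\<^sub>m n n" unfolding pow_mat_add'[OF B] nil using A B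
        by simp
      hence "mat_kernel (B ^\<^sub>m j * A) = carrier_vec n" using s mat_kernel_zero[of n] mat_kernel[OF C]
        by auto
      hence "kernel_dim (B ^\<^sub>m j * A) = n" using full_kdim[OF C] by auto
      thus False using False by simp
    qed
    thus ?thesis using Suc False by linarith
  qed
qed

lemma D1:
  fixes A B :: "'a :: field mat"
  assumes A: "A \<in> carrier_mat n n" and B: "B \<in> carrier_mat n n"
  and AB: "A * B = B * A" and nil: "B ^\<^sub>m N = 0\<^sub>m n n"
  and v: "v \<in> carrier_vec n"
  shows "B ^\<^sub>m (n - kernel_dim A) *\<^sub>v (A *\<^sub>v v) = 0\<^sub>v n"
proof -
  let ?r = "n - kernel_dim A"
  have C: "B ^\<^sub>m ?r * A \<in> carrier_mat n n" using A B by auto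
  have "kernel_dim (B ^\<^sub>m ?r * A) \<ge> n" using D1_dims[OF A B AB nil, of ?r] kdim_le[OF A] by linarith
  hence "v \<in> mat_kernel (B ^\<^sub>m ?r * A)" using kdim_full[OF C] v by auto
  hence "(B ^\<^sub>m ?r * A) *\<^sub>v v = 0\<^sub>v n" using mat_kernelD[OF C] by auto
  thus ?thesis using A B v by (simp add: assoc_mult_mat_vec[of _ n n _ n v])
qed



lemma jb_pow_mult_index:
  assumes u: "u \<in> carrier_vec k" and i: "i < k"
  shows "((jordan_block k (0 :: 'a :: field) ^\<^sub>m r) *\<^sub>v u) $ i = (if i + r < k then u $ (i + r) else 0)"
proof -
  have "((jordan_block k (0 :: 'a) ^\<^sub>m r) *\<^sub>v u) $ i
     = (\<Sum>j\<in>{0..<k}. (if j = i + r then u $ j else 0))"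
  proof -
    have "((jordan_block k (0 :: 'a) ^\<^sub>m r) *\<^sub>v u) $ i
       = (\<Sum>j = 0..<k. (if i \<le> j \<and> j - i = r then 1 else 0) * u $ j)"
      unfolding jordan_block_zero_pow using u i
      by (auto simp: mult_mat_vec_def scalar_prod_def)
    also have "\<dots> = (\<Sum>j\<in>{0..<k}. (if j = i + r then u $ j else 0))"
      by (rule sum.cong, auto)
    finally show ?thesis .
  qed
  also have "\<dots> = (if i + r < k then u $ (i + r) else 0)"
    by (subst sum.delta, auto)
  finally show ?thesis .
qed

definition preim_ker :: "'a :: field mat \<Rightarrow> bool" where
  "preim_ker M \<longleftrightarrow> (\<forall>v\<in>carrier_vec (dim_col M). M *\<^sub>v v = 0\<^sub>v (dim_row M) \<longrightarrow>
     (\<exists>u\<in>carrier_vec (dim_col M). M *\<^sub>v u = v))"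

lemma preim_ker_jb:
  assumes "2 * r \<le> k"
  shows "preim_ker (jordan_block k (0 :: 'a :: field) ^\<^sub>m r)"
  unfolding preim_ker_def
proof (intro ballI impI)
  fix v :: "'a vec"
  assume v: "v \<in> carrier_vec (dim_col (jordan_block k (0::'a) ^\<^sub>m r))"
    and v0: "jordan_block k (0::'a) ^\<^sub>m r *\<^sub>v v = 0\<^sub>v (dim_row (jordan_block k (0::'a) ^\<^sub>m r))"
  have hd: "dim_col (jordan_block k (0::'a) ^\<^sub>m r) = k" by (rule jordan_block_pow_dim(2))
  have vc: "v \<in> carrier_vec k" using v unfolding hd .
  have z: "\<And>i. i + r < k \<Longrightarrow> v $ (i + r) = 0"
  proof -
    fix i assume ir: "i + r < k"
    have "(jordan_block k (0::'a) ^\<^sub>m r *\<^sub>v v) $ i = 0" using v0 ir by simp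
    thus "v $ (i + r) = 0" using jb_pow_mult_index[OF vc, of i r] ir by simp
  qed
  define u where "u = vec k (\<lambda>j. if r \<le> j then v $ (j - r) else 0)"
  have uc: "u \<in> carrier_vec k" unfolding u_def by simp
  have "jordan_block k (0::'a) ^\<^sub>m r *\<^sub>v u = v"
  proof (rule eq_vecI)
    fix i assume "i < dim_vec v"
    hence i: "i < k" using vc by simp
    show "(jordan_block k (0::'a) ^\<^sub>m r *\<^sub>v u) $ i = v $ i"
    proof (cases "i + r < k")
      case True thus ?thesis unfolding jb_pow_mult_index[OF uc i] unfolding u_def by simp
    next
      case False
      hence "v $ ((i - r) + r) = 0" using z[of "i - r"] assms i by simp
      moreover have "(i - r) + r = i" using False assms i by simp
      ultimately show ?thesis unfolding jb_pow_mult_index[OF uc i] using False by simp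
    qed
  qed (insert vc, simp)
  thus "\<exists>u\<in>carrier_vec (dim_col (jordan_block k (0::'a) ^\<^sub>m r)). jordan_block k (0::'a) ^\<^sub>m r *\<^sub>v u = v"
    using uc by auto
qed

lemma preim_ker_four_block:
  fixes M1 M2 :: "'a :: field mat"
  assumes M1: "M1 \<in> carrier_mat a a" and M2: "M2 \<in> carrier_mat b b"
  and p1: "preim_ker M1" and p2: "preim_ker M2"
  shows "preim_ker (four_block_mat M1 (0\<^sub>m a b) (0\<^sub>m b a) M2)"
  unfolding preim_ker_def
proof (intro ballI impI)
  let ?M = "four_block_mat M1 (0\<^sub>m a b) (0\<^sub>m b a) M2"
  have MC: "?M \<in> carrier_mat (a + b) (a + b)" using M1 M2 by auto
  fix v :: "'a vec"
  assume v: "v \<in> carrier_vec (dim_col ?M)" and v0: "?M *\<^sub>v v = 0\<^sub>v (dim_row ?M)"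
  hence vc: "v \<in> carrier_vec (a + b)" using MC M1 M2 by simp
  define v1 where "v1 = vec_first v a"
  define v2 where "v2 = vec_last v b"
  have vv: "v = v1 @\<^sub>v v2" unfolding v1_def v2_def using vc by simp
  have v1c: "v1 \<in> carrier_vec a" and v2c: "v2 \<in> carrier_vec b" unfolding v1_def v2_def by auto
  have "?M *\<^sub>v v = M1 *\<^sub>v v1 @\<^sub>v M2 *\<^sub>v v2" unfolding vv
    by (rule mult_mat_vec_split [OF M1 M2 v1c v2c])
  moreover have "0\<^sub>v (dim_row ?M) = 0\<^sub>v a @\<^sub>v (0\<^sub>v b :: 'a vec)" using MC by (intro eq_vecI, auto)
  ultimately have "M1 *\<^sub>v v1 @\<^sub>v M2 *\<^sub>v v2 = 0\<^sub>v a @\<^sub>v 0\<^sub>v b" using v0 by simp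
  hence e1: "M1 *\<^sub>v v1 = 0\<^sub>v a" and e2: "M2 *\<^sub>v v2 = 0\<^sub>v b"
    using append_vec_eq[of "M1 *\<^sub>v v1" a "0\<^sub>v a"] M1 v1c by auto
  obtain u1 where u1: "u1 \<in> carrier_vec a" "M1 *\<^sub>v u1 = v1"
    using p1 e1 v1c M1 unfolding preim_ker_def by auto
  obtain u2 where u2: "u2 \<in> carrier_vec b" "M2 *\<^sub>v u2 = v2"
    using p2 e2 v2c M2 unfolding preim_ker_def by auto
  have "?M *\<^sub>v (u1 @\<^sub>v u2) = v"
    unfolding mult_mat_vec_split[OF M1 M2 u1(1) u2(1)] u1 u2 vv ..
  moreover have "u1 @\<^sub>v u2 \<in> carrier_vec (dim_col ?M)" using u1 u2 MC by auto
  ultimately show "\<exists>u\<in>carrier_vec (dim_col ?M). ?M *\<^sub>v u = v" by blast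
qed

lemma preim_ker_diag_block:
  assumes "\<And>M. M \<in> set Ms \<Longrightarrow> square_mat M \<and> preim_ker (M :: 'a :: field mat)"
  shows "preim_ker (diag_block_mat Ms)"
  using assms
proof (induct Ms)
  case Nil
  show ?case unfolding preim_ker_def
  proof (intro ballI impI)
    fix v :: "'a vec" assume "v \<in> carrier_vec (dim_col (diag_block_mat ([] :: 'a mat list)))"
    hence v: "v \<in> carrier_vec 0" by simp
    have "diag_block_mat ([] :: 'a mat list) *\<^sub>v v = v" using v by (intro eq_vecI, auto)
    thus "\<exists>u\<in>carrier_vec (dim_col (diag_block_mat ([] :: 'a mat list))). diag_block_mat [] *\<^sub>v u = v"
      using v by auto
  qed
next
  case (Cons M Ms)
  let ?D = "diag_block_mat Ms"
  have sq: "square_mat M" and pM: "preim_ker M" using Cons(2) by auto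
  have pD: "preim_ker ?D" using Cons by auto
  have sqD: "square_mat ?D" by (rule diag_block_mat_square, insert Cons(2), auto)
  have MC: "M \<in> carrier_mat (dim_row M) (dim_row M)" using sq by auto
  have DC: "?D \<in> carrier_mat (dim_row ?D) (dim_row ?D)" using sqD by auto
  show ?case using preim_ker_four_block[OF MC DC pM pD] sq sqD
    by (simp add: Let_def)
qed



lemma jnf_dim: assumes X: "X \<in> carrier_mat n n" and j: "jordan_nf X xs"
  shows "sum_list (map fst xs) = n"
proof -
  from j obtain P Q where w: "similar_mat_wit X (jordan_matrix xs) P Q"
    unfolding jordan_nf_def similar_mat_def by auto
  from similar_mat_witD2[OF X w] have "jordan_matrix xs \<in> carrier_mat n n" by auto
  from carrier_matD(1)[OF this] carrier_matD(1)[OF jordan_matrix_carrier[of xs]]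
  show ?thesis by simp
qed

lemma jnf_kdim: assumes X: "(X :: 'a :: field mat) \<in> carrier_mat n n" and j: "jordan_nf X xs"
  shows "kernel_dim (X ^\<^sub>m k) = (\<Sum> s \<leftarrow> map fst [(s, e)\<leftarrow>xs . e = 0]. min k s)"
proof -
  have "char_matrix X 0 = X" unfolding char_matrix_def using X by auto
  thus ?thesis using dim_gen_eigenspace[OF j, of 0 k] unfolding dim_gen_eigenspace_def by simp
qed

lemma sum_filter_le: "(\<Sum> s \<leftarrow> map fst [(s, e)\<leftarrow>xs . e = (0::'a::zero)]. min (k::nat) s) \<le> sum_list (map fst xs)"
  by (induct xs, auto simp: min_def)

lemma sum_filter_eq:
  assumes "\<forall>x\<in>set xs. fst x > (0::nat)"
    and "(\<Sum> s \<leftarrow> map fst [(s, e)\<leftarrow>xs . e = (0::'a::zero)]. min k s) = sum_list (map fst xs)"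
  shows "\<forall>(s,e)\<in>set xs. e = 0 \<and> s \<le> k"
  using assms
proof (induct xs)
  case Nil then show ?case by simp
next
  case (Cons x xs)
  obtain s e where x: "x = (s,e)" by force
  have le: "(\<Sum> s \<leftarrow> map fst [(s, e)\<leftarrow>xs . e = 0]. min k s) \<le> sum_list (map fst xs)"
    by (rule sum_filter_le)
  show ?case
  proof (cases "e = 0")
    case True
    then have "min k s + (\<Sum> s \<leftarrow> map fst [(s, e)\<leftarrow>xs . e = 0]. min k s) = s + sum_list (map fst xs)"
      using Cons(3) x by simp
    hence sk: "s \<le> k" and eq: "(\<Sum> s \<leftarrow> map fst [(s, e)\<leftarrow>xs . e = 0]. min k s) = sum_list (map fst xs)"
      using le by (auto simp: min_def split: if_splits)
    have pos: "\<forall>x\<in>set xs. fst x > 0" using Cons(2) by simp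
    have "\<forall>(s,e)\<in>set xs. e = 0 \<and> s \<le> k" using Cons(1)[OF pos eq] .
    thus ?thesis using sk True x by simp
  next
    case False
    then have "(\<Sum> s \<leftarrow> map fst [(s, e)\<leftarrow>xs . e = 0]. min k s) = s + sum_list (map fst xs)"
      using Cons(3) x by simp
    moreover have "s > 0" using Cons(2) x by auto
    ultimately have False using le by linarith
    thus ?thesis ..
  qed
qed

lemma jnf_nilpotent_ev:
  assumes X: "(X :: 'a :: field mat) \<in> carrier_mat n n" and j: "jordan_nf X xs"
    and nil: "nilpotent_mat X"
  shows "\<forall>(s,e)\<in>set xs. e = 0"
proof -
  from nil obtain N where N: "X ^\<^sub>m N = 0\<^sub>m n n" unfolding nilpotent_mat_def using X by auto
  have C: "X ^\<^sub>m N \<in> carrier_mat n n" using X by auto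
  have "kernel_dim (X ^\<^sub>m N) = n" by (rule full_kdim[OF C], unfold N, rule mat_kernel_zero)
  hence "(\<Sum> s \<leftarrow> map fst [(s, e)\<leftarrow>xs . e = 0]. min N s) = sum_list (map fst xs)"
    using jnf_kdim[OF X j, where k=N] jnf_dim[OF X j] by simp
  moreover have "\<forall>x\<in>set xs. fst x > 0" using j unfolding jordan_nf_def by force
  ultimately have "\<forall>(s,e)\<in>set xs. e = 0 \<and> s \<le> N" by (intro sum_filter_eq)
  thus ?thesis by auto
qed

lemma D2:
  assumes B: "(B :: 'a :: field mat) \<in> carrier_mat n n" and j: "jordan_nf B xs"
    and ev: "\<forall>(s,e)\<in>set xs. e = 0" and sz: "\<forall>(s,e)\<in>set xs. 2 * r \<le> s"
    and w: "w \<in> carrier_vec n" and w0: "B ^\<^sub>m r *\<^sub>v w = 0\<^sub>v n"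
  shows "\<exists>u \<in> carrier_vec n. B ^\<^sub>m r *\<^sub>v u = w"
proof -
  from j obtain P Q where wit: "similar_mat_wit B (jordan_matrix xs) P Q"
    unfolding jordan_nf_def similar_mat_def by auto
  from similar_mat_witD2[OF B wit] have PQ: "P * Q = 1\<^sub>m n" and QP: "Q * P = 1\<^sub>m n"
    and J: "jordan_matrix xs \<in> carrier_mat n n" and P: "P \<in> carrier_mat n n" and Q: "Q \<in> carrier_mat n n"
    by auto
  let ?J = "jordan_matrix xs ^\<^sub>m r"
  have JC: "?J \<in> carrier_mat n n" using J by auto
  have Br: "B ^\<^sub>m r = P * ?J * Q" by (rule similar_mat_wit_pow_id[OF wit])
  have pk: "preim_ker ?J"
    unfolding jordan_matrix_pow
  proof (rule preim_ker_diag_block)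
    fix M assume "M \<in> set (map (\<lambda>(n, a). jordan_block n a ^\<^sub>m r) xs)"
    then obtain s e where se: "(s,e) \<in> set xs" and M: "M = jordan_block s e ^\<^sub>m r" by auto
    from se ev sz have "e = 0" "2 * r \<le> s" by auto
    thus "square_mat M \<and> preim_ker M" unfolding M using preim_ker_jb[of r s] by auto
  qed
  have PJ: "P * ?J \<in> carrier_mat n n" using P JC by auto
  have Qw: "Q *\<^sub>v w \<in> carrier_vec n" using Q w by auto
  have "?J *\<^sub>v (Q *\<^sub>v w) = (?J * Q) *\<^sub>v w" using assoc_mult_mat_vec[OF JC Q w] by simp
  also have "?J * Q = Q * B ^\<^sub>m r"
  proof -
    have "Q * B ^\<^sub>m r = Q * ((P * ?J) * Q)" unfolding Br ..
    also have "\<dots> = (Q * (P * ?J)) * Q" using assoc_mult_mat[OF Q PJ Q] by simp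
    also have "Q * (P * ?J) = (Q * P) * ?J" using assoc_mult_mat[OF Q P JC] by simp
    finally show ?thesis unfolding QP using left_mult_one_mat[OF JC] by simp
  qed
  also have "(Q * B ^\<^sub>m r) *\<^sub>v w = Q *\<^sub>v (B ^\<^sub>m r *\<^sub>v w)" using assoc_mult_mat_vec[OF Q pow_carrier_mat[OF B] w] by simp
  also have "\<dots> = 0\<^sub>v n" unfolding w0 using Q by auto
  finally have "?J *\<^sub>v (Q *\<^sub>v w) = 0\<^sub>v n" .
  then obtain u' where u': "u' \<in> carrier_vec n" "?J *\<^sub>v u' = Q *\<^sub>v w"
  proof -
    have pk': "\<forall>v\<in>carrier_vec n. ?J *\<^sub>v v = 0\<^sub>v n \<longrightarrow> (\<exists>u\<in>carrier_vec n. ?J *\<^sub>v u = v)"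
      using pk unfolding preim_ker_def carrier_matD[OF JC] .
    assume "\<And>u'. u' \<in> carrier_vec n \<Longrightarrow> ?J *\<^sub>v u' = Q *\<^sub>v w \<Longrightarrow> thesis"
    thus thesis using pk' Qw \<open>?J *\<^sub>v (Q *\<^sub>v w) = 0\<^sub>v n\<close> by blast
  qed
  have Pu: "P *\<^sub>v u' \<in> carrier_vec n" using P u' by auto
  have PJQ: "P * ?J * Q \<in> carrier_mat n n" using P JC Q by auto
  have "B ^\<^sub>m r *\<^sub>v (P *\<^sub>v u') = (P * ?J * Q * P) *\<^sub>v u'"
    unfolding Br using assoc_mult_mat_vec[OF PJQ P u'(1)] by simp
  also have "P * ?J * Q * P = P * ?J"
  proof -
    have "P * ?J * Q * P = (P * ?J) * (Q * P)" using assoc_mult_mat[OF PJ Q P] .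
    thus ?thesis unfolding QP using right_mult_one_mat[OF PJ] by simp
  qed
  also have "(P * ?J) *\<^sub>v u' = P *\<^sub>v (Q *\<^sub>v w)" using assoc_mult_mat_vec[OF P JC u'(1)] u' by simp
  also have "\<dots> = w" using assoc_mult_mat_vec[OF P Q w] PQ w by simp
  finally show ?thesis by (rule bexI[OF _ Pu])
qed


lemma sum_min1: "\<forall>x\<in>set xs. fst x > (0::nat) \<Longrightarrow> sum_list (map (min 1) (map fst xs)) = length xs"
  by (induct xs, auto)

theorem proposition2p6:
  fixes A B :: "'a :: {alg_closed_field, field_char_0} mat"
    and n :: nat
    and lam mu :: "(nat \<times> 'a) list"
  assumes "A \<in> carrier_mat n n" and "B \<in> carrier_mat n n"
    and "A * B = B * A"
    and "nilpotent_mat A" and "nilpotent_mat B"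
    and "jordan_nf B lam" and "jordan_nf A mu"
    and "real (length mu) \<ge> real n - real (Min (fst ` set lam)) / 2"
  shows "\<forall>k \<in> fst ` set mu. k \<le> 2"
proof -
  note A = assms(1) and B = assms(2) and AB = assms(3) and jB = assms(6) and jA = assms(7)
  have evA: "\<forall>(s,e)\<in>set mu. e = 0" by (rule jnf_nilpotent_ev[OF A jA assms(4)])
  have evB: "\<forall>(s,e)\<in>set lam. e = 0" by (rule jnf_nilpotent_ev[OF B jB assms(5)])
  have sumA: "sum_list (map fst mu) = n" by (rule jnf_dim[OF A jA])
  have sumB: "sum_list (map fst lam) = n" by (rule jnf_dim[OF B jB])
  have posA: "\<forall>x\<in>set mu. fst x > 0" using jA unfolding jordan_nf_def by force
  have fA: "[(s, e)\<leftarrow>mu . e = 0] = mu" using evA by (intro filter_True, auto)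
  have A1: "A ^\<^sub>m 1 = A" using A by simp
  have kA: "kernel_dim A = length mu"
    using jnf_kdim[OF A jA, where k=1] unfolding A1 fA using sum_min1[OF posA] by simp
  show ?thesis
  proof (cases "mu = []")
    case True thus ?thesis by simp
  next
    case False
    then obtain x where "x \<in> set mu" by (cases mu, auto)
    hence "n > 0" using posA sumA by (metis elem_le_sum_list gr_zeroI in_set_conv_nth le_zero_eq length_map nth_map)
    hence "lam \<noteq> []" using sumB by auto
    define m where "m = Min (fst ` set lam)"
    have mle: "\<forall>(s,e)\<in>set lam. m \<le> s" unfolding m_def
    proof (intro ballI, clarify)
      fix a b assume "(a, b) \<in> set lam"
      hence "a \<in> fst ` set lam" by force
      thus "Min (fst ` set lam) \<le> a" by (intro Min_le, auto)
    qed
    define r where "r = n - kernel_dim A"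
    have kle: "kernel_dim A \<le> n" by (rule kdim_le[OF A])
    have "real (kernel_dim A) \<ge> real n - real m / 2" using assms(8) kA m_def by simp
    hence "2 * r \<le> m" unfolding r_def using kle by (simp add: of_nat_diff)
    hence sz: "\<forall>(s,e)\<in>set lam. 2 * r \<le> s" using mle by auto
    from assms(5) obtain N where N: "B ^\<^sub>m N = 0\<^sub>m n n" unfolding nilpotent_mat_def using B by auto
    have AA: "\<And>v. v \<in> carrier_vec n \<Longrightarrow> A *\<^sub>v (A *\<^sub>v v) = 0\<^sub>v n"
    proof -
      fix v :: "'a vec" assume v: "v \<in> carrier_vec n"
      have wc: "A *\<^sub>v v \<in> carrier_vec n" using A v by auto
      have w0: "B ^\<^sub>m r *\<^sub>v (A *\<^sub>v v) = 0\<^sub>v n" unfolding r_def by (rule D1[OF A B AB N v])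
      obtain u where u: "u \<in> carrier_vec n" and uw: "B ^\<^sub>m r *\<^sub>v u = A *\<^sub>v v"
        using D2[OF B jB evB sz wc w0] by auto
      have Br: "B ^\<^sub>m r \<in> carrier_mat n n" using B by auto
      have "A *\<^sub>v (A *\<^sub>v v) = A *\<^sub>v (B ^\<^sub>m r *\<^sub>v u)" unfolding uw ..
      also have "\<dots> = (A * B ^\<^sub>m r) *\<^sub>v u" using assoc_mult_mat_vec[OF A Br u] by simp
      also have "A * B ^\<^sub>m r = B ^\<^sub>m r * A" by (rule pow_comm[OF A B AB])
      also have "(B ^\<^sub>m r * A) *\<^sub>v u = B ^\<^sub>m r *\<^sub>v (A *\<^sub>v u)" using assoc_mult_mat_vec[OF Br A u] by simp
      also have "\<dots> = 0\<^sub>v n" unfolding r_def by (rule D1[OF A B AB N u])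
      finally show "A *\<^sub>v (A *\<^sub>v v) = 0\<^sub>v n" .
    qed
    have A2: "A ^\<^sub>m 2 = A * A" using A by (simp add: numeral_2_eq_2)
    have A2C: "A ^\<^sub>m 2 \<in> carrier_mat n n" using A by auto
    have "mat_kernel (A ^\<^sub>m 2) = carrier_vec n"
    proof
      show "mat_kernel (A ^\<^sub>m 2) \<subseteq> carrier_vec n" using mat_kernel[OF A2C] by blast
      show "carrier_vec n \<subseteq> mat_kernel (A ^\<^sub>m 2)"
      proof
        fix v :: "'a vec" assume v: "v \<in> carrier_vec n"
        have "(A ^\<^sub>m 2) *\<^sub>v v = 0\<^sub>v n" unfolding A2 using assoc_mult_mat_vec[OF A A v] AA[OF v] by simp
        thus "v \<in> mat_kernel (A ^\<^sub>m 2)" by (rule mat_kernelI[OF A2C v])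
      qed
    qed
    hence "kernel_dim (A ^\<^sub>m 2) = n" by (rule full_kdim[OF A2C])
    hence "(\<Sum> s \<leftarrow> map fst [(s, e)\<leftarrow>mu . e = 0]. min 2 s) = sum_list (map fst mu)"
      using jnf_kdim[OF A jA, where k=2] sumA by simp
    hence "\<forall>(s,e)\<in>set mu. e = 0 \<and> s \<le> 2" using posA by (intro sum_filter_eq)
    thus ?thesis by auto
  qed
qed

end
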